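(* Let $k$ be a field of characteristic $0$. The operad $\mathcal{P}ost\mathcal{L}ie$ is the Koszul dual operad of the operad $\mathcal{C}om\mathcal{T}rias$: $\mathcal{C}om\mathcal{T}rias^!\cong\mathcal{P}ost\mathcal{L}ie$, under the identification of the linear dual of $*$ with $\circ$ and of the linear dual of $\bullet$ with $[\,,\,]$.
   Context: $\mathcal{C}om\mathcal{T}rias$ is the quadratic operad generated by a binary operation $*$ (no symmetry) and a commutative binary operation $\bullet$, with relations $(x*y)*z=x*(y*z)=x*(z*y)$, $(x\bullet y)\bullet z=x\bullet(y\bullet z)$, $x*(y\bullet z)=x*(y*z)$, $(x\bullet y)*z=x\bullet(y*z)$. $\mathcal{P}ost\mathcal{L}ie$ is the quadratic operad generated by a binary operation $\circ$ and an antisymmetric binary operation $[\,,\,]$, with relations: Jacobi for $[\,,\,]$, $(x\circ y)\circ z-x\circ(y\circ z)-(x\circ z)\circ y+x\circ(z\circ y)=x\circ[y,z]$, and $[x,y]\circ z=[x\circ z,y]+[x,y\circ z]$. For a quadratic operad $\mathcal F(V)/(R)$, its Koszul dual is $\mathcal F(V^\vee)/(R^\perp)$, where $V^\vee(n)=V(n)^*\otimes\mathrm{sgn}_n$ and $R^\perp$ is the orthogonal of $R$ under the natural pairing between the two-vertex parts of $\mathcal F(V^\vee)$ and $\mathcal F(V)$. *)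

theory Defs
  imports Complex_Main "HOL-Library.Function_Algebras"
begin

text \<open>
  Let V = V(2) be the space of binary generating operations, with a basis indexed by a
  finite type 'g, so V = ('g => 'k).  The S_2-action is given by the matrix M of the
  transposition tau: M g h is the coefficient of e_g in tau(e_h), where
  (tau mu)(x1,x2) = mu(x2,x1).

  The two-vertex (arity 3) part F(V)(3) is identified with 3 copies of V (x) V, using the
  normal-form tree basis  (c,g,h)  =  e_g( e_h(x_a, x_b), x_c ),
  where c is the leaf NOT under the inner vertex and a < b are the other two leaves.
\<close>

datatype leaf = L1 | L2 | L3

lemma leaf_UNIV: "(UNIV :: leaf set) = {L1, L2, L3}"
  using leaf.exhaust by auto

instance leaf :: finite
  by standard (simp add: leaf_UNIV)

fun lnum :: "leaf \<Rightarrow> nat" where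
  "lnum L1 = 1" | "lnum L2 = 2" | "lnum L3 = 3"

type_synonym ('k, 'g) tree3 = "leaf \<times> 'g \<times> 'g \<Rightarrow> 'k"

definition fscale :: "'k::times \<Rightarrow> ('i \<Rightarrow> 'k) \<Rightarrow> ('i \<Rightarrow> 'k)" where
  "fscale c v = (\<lambda>i. c * v i)"

abbreviation lspan :: "('i \<Rightarrow> 'k::field) set \<Rightarrow> ('i \<Rightarrow> 'k) set" where
  "lspan S \<equiv> Modules.module.span fscale S"

definition matact :: "('g \<Rightarrow> 'h::finite \<Rightarrow> 'k::comm_ring_1) \<Rightarrow> ('h \<Rightarrow> 'k) \<Rightarrow> ('g \<Rightarrow> 'k)" where
  "matact P v = (\<lambda>g. \<Sum>h\<in>UNIV. P g h * v h)"

definition ev :: "'g \<Rightarrow> 'g \<Rightarrow> 'k::zero_neq_one" where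
  "ev g = (\<lambda>h. if h = g then 1 else 0)"

text \<open>The tree  mu( nu(x_a, x_b), x_c )  in F(V)(3), for distinct leaves a, b, c
  (rewritten into normal form using the S_2-action M on the inner vertex).\<close>
definition lt :: "('g::finite \<Rightarrow> 'g \<Rightarrow> 'k::comm_ring_1) \<Rightarrow> ('g \<Rightarrow> 'k) \<Rightarrow> ('g \<Rightarrow> 'k)
                 \<Rightarrow> leaf \<Rightarrow> leaf \<Rightarrow> leaf \<Rightarrow> ('k, 'g) tree3" where
  "lt M mu nu a b c =
     (let nu' = (if lnum a < lnum b then nu else matact M nu)
      in (\<lambda>(c', g, h). if c' = c then mu g * nu' h else 0))"

text \<open>The tree  mu( x_a, nu(x_b, x_c) ) = (tau mu)( nu(x_b, x_c), x_a ).\<close>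
definition rt :: "('g::finite \<Rightarrow> 'g \<Rightarrow> 'k::comm_ring_1) \<Rightarrow> ('g \<Rightarrow> 'k) \<Rightarrow> leaf \<Rightarrow> ('g \<Rightarrow> 'k)
                 \<Rightarrow> leaf \<Rightarrow> leaf \<Rightarrow> ('k, 'g) tree3" where
  "rt M mu a nu b c = lt M (matact M mu) nu b c a"

definition distinct3 :: "leaf \<Rightarrow> leaf \<Rightarrow> leaf \<Rightarrow> bool" where
  "distinct3 x y z \<longleftrightarrow> x \<noteq> y \<and> y \<noteq> z \<and> x \<noteq> z"

text \<open>V^dual = V^* (x) sgn: in the dual basis, tau acts by  -M^T.\<close>
definition kd_action :: "('g \<Rightarrow> 'g \<Rightarrow> 'k::comm_ring_1) \<Rightarrow> ('g \<Rightarrow> 'g \<Rightarrow> 'k)" where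
  "kd_action M = (\<lambda>g h. - M h g)"

text \<open>The natural pairing F(V^dual)(3) x F(V)(3) -> k:
  < alpha(beta(x_a,x_b),x_c), mu(nu(x_a,x_b),x_c) > = alpha(mu) beta(nu)
  for the three cyclic shapes (12)3, (23)1, (31)2, and 0 between different shapes.
  In the normal-form basis (a < b) the shape (31)2 is rewritten as (13)2, which
  (because of the sign twist of V^dual) produces the sign -1 for outer leaf L2.\<close>
fun leaf_sign :: "leaf \<Rightarrow> 'k::comm_ring_1" where
  "leaf_sign L1 = 1" | "leaf_sign L2 = -1" | "leaf_sign L3 = 1"

definition kd_pair :: "('k::comm_ring_1, 'g::finite) tree3 \<Rightarrow> ('k, 'g) tree3 \<Rightarrow> 'k" where
  "kd_pair Phi T = (\<Sum>(c, g, h)\<in>UNIV. leaf_sign c * Phi (c, g, h) * T (c, g, h))"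

definition kd_rel :: "('k::comm_ring_1, 'g::finite) tree3 set \<Rightarrow> ('k, 'g) tree3 set" where
  "kd_rel R = {Phi. \<forall>T\<in>R. kd_pair Phi T = 0}"

definition tree_map :: "('g \<Rightarrow> 'h::finite \<Rightarrow> 'k::comm_ring_1) \<Rightarrow> ('k, 'h) tree3 \<Rightarrow> ('k, 'g) tree3" where
  "tree_map P T = (\<lambda>(c, g, h). \<Sum>(g', h')\<in>UNIV. P g g' * P h h' * T (c, g', h'))"

definition quad_iso :: "('h::finite \<Rightarrow> 'h \<Rightarrow> 'k::comm_ring_1) \<Rightarrow> ('k, 'h) tree3 set
      \<Rightarrow> ('g::finite \<Rightarrow> 'g \<Rightarrow> 'k) \<Rightarrow> ('k, 'g) tree3 set \<Rightarrow> ('g \<Rightarrow> 'h \<Rightarrow> 'k) \<Rightarrow> bool" where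
  "quad_iso M1 R1 M2 R2 P \<longleftrightarrow>
     bij (matact P) \<and>
     (\<forall>v. matact P (matact M1 v) = matact M2 (matact P v)) \<and>
     tree_map P ` R1 = R2"

datatype ct_gen = Star | StarOp | Dot
  \<comment> \<open>basis of V(2): x*y, y*x (= tau applied to *), and the commutative x.y\<close>

lemma ct_gen_UNIV: "(UNIV :: ct_gen set) = {Star, StarOp, Dot}"
  using ct_gen.exhaust by auto

instance ct_gen :: finite
  by standard (simp add: ct_gen_UNIV)

fun ct_tau :: "ct_gen \<Rightarrow> ct_gen" where
  "ct_tau Star = StarOp" | "ct_tau StarOp = Star" | "ct_tau Dot = Dot"

definition ct_action :: "ct_gen \<Rightarrow> ct_gen \<Rightarrow> 'k::comm_ring_1" where
  "ct_action g h = (if g = ct_tau h then 1 else 0)"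

definition ct_rels :: "('k::comm_ring_1, ct_gen) tree3 set" where
  "ct_rels = (let M = ct_action; s = ev Star; d = ev Dot in
     {r. \<exists>x y z. distinct3 x y z \<and>
       (r = lt M s s x y z - rt M s x s y z \<comment> \<open>(x*y)*z = x*(y*z)\<close>
      \<or> r = rt M s x s y z - rt M s x s z y \<comment> \<open>x*(y*z) = x*(z*y)\<close>
      \<or> r = lt M d d x y z - rt M d x d y z \<comment> \<open>(x.y).z = x.(y.z)\<close>
      \<or> r = rt M s x d y z - rt M s x s y z \<comment> \<open>x*(y.z) = x*(y*z)\<close>
      \<or> r = lt M s d x y z - rt M d x s y z \<comment> \<open>(x.y)*z = x.(y*z)\<close>)})"

datatype pl_gen = Circ | CircOp | Br
  \<comment> \<open>basis of V(2): x o y, y o x, and the antisymmetric [x,y]\<close>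

lemma pl_gen_UNIV: "(UNIV :: pl_gen set) = {Circ, CircOp, Br}"
  using pl_gen.exhaust by auto

instance pl_gen :: finite
  by standard (simp add: pl_gen_UNIV)

definition pl_action :: "pl_gen \<Rightarrow> pl_gen \<Rightarrow> 'k::comm_ring_1" where
  "pl_action g h = (case h of
      Circ \<Rightarrow> (if g = CircOp then 1 else 0)
    | CircOp \<Rightarrow> (if g = Circ then 1 else 0)
    | Br \<Rightarrow> (if g = Br then -1 else 0))"

definition pl_rels :: "('k::comm_ring_1, pl_gen) tree3 set" where
  "pl_rels = (let M = pl_action; c = ev Circ; b = ev Br in
     {r. \<exists>x y z. distinct3 x y z \<and>
       (r = lt M b b x y z + lt M b b y z x + lt M b b z x y \<comment> \<open>Jacobi\<close>
      \<or> r = lt M c c x y z - rt M c x c y z - lt M c c x z y + rt M c x c z y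
             - rt M c x b y z
             \<comment> \<open>(x o y) o z - x o (y o z) - (x o z) o y + x o (z o y) = x o [y,z], with c = o\<close>
      \<or> r = lt M c b x y z - lt M b c x z y - rt M b x c y z
             \<comment> \<open>[x,y] o z = [x o z, y] + [x, y o z]\<close>)})"

text \<open>o  |->  dual of *;  [,]  |->  dual of . ; by S_2-equivariance (V^dual carries the
  sign-twisted action) y o x = tau(o) |-> tau^dual(dual of * ) = - (dual of y*x).\<close>
definition ident :: "ct_gen \<Rightarrow> pl_gen \<Rightarrow> 'k::comm_ring_1" where
  "ident g h = (case h of
      Circ \<Rightarrow> (if g = Star then 1 else 0)
    | CircOp \<Rightarrow> (if g = StarOp then -1 else 0)
    | Br \<Rightarrow> (if g = Dot then 1 else 0))"

end

theory Submission
  imports Defs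
begin

lemma sum_UNIV3: "(\<Sum>x\<in>(UNIV::(leaf\<times>'g::finite\<times>'g) set). f x) = (\<Sum>c\<in>UNIV. \<Sum>g\<in>UNIV. \<Sum>h\<in>UNIV. f (c,g,h))"
  by (simp add: sum.cartesian_product UNIV_Times_UNIV[symmetric] case_prod_beta' del: UNIV_Times_UNIV)

lemma sum_UNIV2: "(\<Sum>x\<in>(UNIV::('g::finite\<times>'g) set). f x) = (\<Sum>g\<in>UNIV. \<Sum>h\<in>UNIV. f (g,h))"
  by (simp add: sum.cartesian_product UNIV_Times_UNIV[symmetric] case_prod_beta' del: UNIV_Times_UNIV)

lemmas expand = sum_UNIV3 sum_UNIV2 leaf_UNIV ct_gen_UNIV pl_gen_UNIV kd_pair_def lt_def rt_def matact_def ev_def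
   ct_action_def pl_action_def ident_def tree_map_def

lemma module_fscale: "module (fscale :: 'a::comm_ring_1 \<Rightarrow> ('i \<Rightarrow> 'a) \<Rightarrow> _)"
  by unfold_locales (auto simp: fscale_def fun_eq_iff algebra_simps)

definition "ct_r1 x y z = lt ct_action (ev Star) (ev Star) x y z - rt ct_action (ev Star) x (ev Star) y z"
definition "ct_r2 x y z = rt ct_action (ev Star) x (ev Star) y z - rt ct_action (ev Star) x (ev Star) z y"
definition "ct_r3 x y z = lt ct_action (ev Dot) (ev Dot) x y z - rt ct_action (ev Dot) x (ev Dot) y z"
definition "ct_r4 x y z = rt ct_action (ev Star) x (ev Dot) y z - rt ct_action (ev Star) x (ev Star) y z"
definition "ct_r5 x y z = lt ct_action (ev Star) (ev Dot) x y z - rt ct_action (ev Dot) x (ev Star) y z"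

lemma ct_rels_eq: "(ct_rels :: ('k::comm_ring_1, ct_gen) tree3 set) = {r. \<exists>x y z. distinct3 x y z \<and>
   (r = ct_r1 x y z \<or> r = ct_r2 x y z \<or> r = ct_r3 x y z \<or> r = ct_r4 x y z \<or> r = ct_r5 x y z)}"
  unfolding ct_rels_def Let_def ct_r1_def ct_r2_def ct_r3_def ct_r4_def ct_r5_def ..

definition "pl_r1 x y z = lt pl_action (ev Br) (ev Br) x y z + lt pl_action (ev Br) (ev Br) y z x + lt pl_action (ev Br) (ev Br) z x y"
definition "pl_r2 x y z = lt pl_action (ev Circ) (ev Circ) x y z - rt pl_action (ev Circ) x (ev Circ) y z - lt pl_action (ev Circ) (ev Circ) x z y + rt pl_action (ev Circ) x (ev Circ) z y
             - rt pl_action (ev Circ) x (ev Br) y z"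
definition "pl_r3 x y z = lt pl_action (ev Circ) (ev Br) x y z - lt pl_action (ev Br) (ev Circ) x z y - rt pl_action (ev Br) x (ev Circ) y z"

lemma pl_rels_eq: "(pl_rels :: ('k::comm_ring_1, pl_gen) tree3 set) = {r. \<exists>x y z. distinct3 x y z \<and>
   (r = pl_r1 x y z \<or> r = pl_r2 x y z \<or> r = pl_r3 x y z)}"
  unfolding pl_rels_def Let_def pl_r1_def pl_r2_def pl_r3_def ..

lemma ct_mem: "distinct3 x y z \<Longrightarrow> ct_r1 x y z \<in> ct_rels" "distinct3 x y z \<Longrightarrow> ct_r2 x y z \<in> ct_rels"
  "distinct3 x y z \<Longrightarrow> ct_r3 x y z \<in> ct_rels" "distinct3 x y z \<Longrightarrow> ct_r4 x y z \<in> ct_rels"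
  "distinct3 x y z \<Longrightarrow> ct_r5 x y z \<in> ct_rels"
  unfolding ct_rels_eq by blast+

lemma pl_mem: "distinct3 x y z \<Longrightarrow> pl_r1 x y z \<in> pl_rels" "distinct3 x y z \<Longrightarrow> pl_r2 x y z \<in> pl_rels"
  "distinct3 x y z \<Longrightarrow> pl_r3 x y z \<in> pl_rels"
  unfolding pl_rels_eq by blast+

lemmas rdefs = ct_r1_def ct_r2_def ct_r3_def ct_r4_def ct_r5_def pl_r1_def pl_r2_def pl_r3_def

definition EE :: "('k::comm_ring_1, ct_gen) tree3 \<Rightarrow> bool" where
  "EE Phi \<longleftrightarrow>
    (Phi (L2, StarOp, StarOp) = - Phi (L1, Star, Star)) \<and>
    (Phi (L2, StarOp, Star) = - Phi (L1, Star, Star)) \<and>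
    (Phi (L2, StarOp, Dot) = - Phi (L1, Star, Star)) \<and>
    (Phi (L3, Star, StarOp) = Phi (L1, Star, Star)) \<and>
    (Phi (L3, StarOp, StarOp) = Phi (L1, Star, StarOp)) \<and>
    (Phi (L3, StarOp, Star) = Phi (L1, Star, StarOp)) \<and>
    (Phi (L3, StarOp, Dot) = Phi (L1, Star, StarOp)) \<and>
    (Phi (L2, Star, StarOp) = - Phi (L1, Star, StarOp)) \<and>
    (Phi (L2, Dot, StarOp) = - Phi (L1, Star, Dot)) \<and>
    (Phi (L3, Dot, StarOp) = Phi (L1, Star, Dot)) \<and>
    (Phi (L3, Star, Star) = Phi (L1, StarOp, Star)) \<and>
    (Phi (L1, StarOp, StarOp) = Phi (L1, StarOp, Star)) \<and>
    (Phi (L1, StarOp, Dot) = Phi (L1, StarOp, Star)) \<and>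
    (Phi (L2, Star, Star) = - Phi (L1, StarOp, Star)) \<and>
    (Phi (L3, Star, Dot) = Phi (L1, Dot, Star)) \<and>
    (Phi (L2, Dot, Star) = - Phi (L1, Dot, Star)) \<and>
    (Phi (L2, Star, Dot) = - Phi (L1, Dot, StarOp)) \<and>
    (Phi (L3, Dot, Star) = Phi (L1, Dot, StarOp)) \<and>
    (Phi (L3, Dot, Dot) = Phi (L1, Dot, Dot)) \<and>
    (Phi (L2, Dot, Dot) = - Phi (L1, Dot, Dot))"

lemma orth_EE:
  fixes Phi :: "('k::field_char_0, ct_gen) tree3"
  assumes h: "\<forall>t\<in>ct_rels. kd_pair Phi t = 0"
  shows "EE Phi"
proof -
  have r0: "kd_pair Phi (ct_r1 L1 L2 L3) = 0"
    by (rule h[rule_format], rule ct_mem) (simp add: distinct3_def)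
  have s0: "- Phi (L1, StarOp, Star) + Phi (L3, Star, Star) = 0"
    using r0 by (simp add: expand rdefs algebra_simps)
  have r1: "kd_pair Phi (ct_r2 L1 L2 L3) = 0"
    by (rule h[rule_format], rule ct_mem) (simp add: distinct3_def)
  have s1: "Phi (L1, StarOp, Star) + - Phi (L1, StarOp, StarOp) = 0"
    using r1 by (simp add: expand rdefs algebra_simps)
  have r2: "kd_pair Phi (ct_r3 L1 L2 L3) = 0"
    by (rule h[rule_format], rule ct_mem) (simp add: distinct3_def)
  have s2: "- Phi (L1, Dot, Dot) + Phi (L3, Dot, Dot) = 0"
    using r2 by (simp add: expand rdefs algebra_simps)
  have r3: "kd_pair Phi (ct_r4 L1 L2 L3) = 0"
    by (rule h[rule_format], rule ct_mem) (simp add: distinct3_def)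
  have s3: "- Phi (L1, StarOp, Star) + Phi (L1, StarOp, Dot) = 0"
    using r3 by (simp add: expand rdefs algebra_simps)
  have r4: "kd_pair Phi (ct_r5 L1 L2 L3) = 0"
    by (rule h[rule_format], rule ct_mem) (simp add: distinct3_def)
  have s4: "- Phi (L1, Dot, Star) + Phi (L3, Star, Dot) = 0"
    using r4 by (simp add: expand rdefs algebra_simps)
  have r5: "kd_pair Phi (ct_r1 L1 L3 L2) = 0"
    by (rule h[rule_format], rule ct_mem) (simp add: distinct3_def)
  have s5: "- Phi (L1, StarOp, StarOp) + - Phi (L2, Star, Star) = 0"
    using r5 by (simp add: expand rdefs algebra_simps)
  have r7: "kd_pair Phi (ct_r3 L1 L3 L2) = 0"
    by (rule h[rule_format], rule ct_mem) (simp add: distinct3_def)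
  have s7: "- Phi (L1, Dot, Dot) + - Phi (L2, Dot, Dot) = 0"
    using r7 by (simp add: expand rdefs algebra_simps)
  have r9: "kd_pair Phi (ct_r5 L1 L3 L2) = 0"
    by (rule h[rule_format], rule ct_mem) (simp add: distinct3_def)
  have s9: "- Phi (L1, Dot, StarOp) + - Phi (L2, Star, Dot) = 0"
    using r9 by (simp add: expand rdefs algebra_simps)
  have r10: "kd_pair Phi (ct_r1 L2 L1 L3) = 0"
    by (rule h[rule_format], rule ct_mem) (simp add: distinct3_def)
  have s10: "Phi (L2, StarOp, Star) + Phi (L3, Star, StarOp) = 0"
    using r10 by (simp add: expand rdefs algebra_simps)
  have r11: "kd_pair Phi (ct_r2 L2 L1 L3) = 0"
    by (rule h[rule_format], rule ct_mem) (simp add: distinct3_def)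
  have s11: "- Phi (L2, StarOp, Star) + Phi (L2, StarOp, StarOp) = 0"
    using r11 by (simp add: expand rdefs algebra_simps)
  have r14: "kd_pair Phi (ct_r5 L2 L1 L3) = 0"
    by (rule h[rule_format], rule ct_mem) (simp add: distinct3_def)
  have s14: "Phi (L2, Dot, Star) + Phi (L3, Star, Dot) = 0"
    using r14 by (simp add: expand rdefs algebra_simps)
  have r15: "kd_pair Phi (ct_r1 L2 L3 L1) = 0"
    by (rule h[rule_format], rule ct_mem) (simp add: distinct3_def)
  have s15: "Phi (L1, Star, Star) + Phi (L2, StarOp, StarOp) = 0"
    using r15 by (simp add: expand rdefs algebra_simps)
  have r18: "kd_pair Phi (ct_r4 L2 L3 L1) = 0"
    by (rule h[rule_format], rule ct_mem) (simp add: distinct3_def)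
  have s18: "Phi (L2, StarOp, StarOp) + - Phi (L2, StarOp, Dot) = 0"
    using r18 by (simp add: expand rdefs algebra_simps)
  have r19: "kd_pair Phi (ct_r5 L2 L3 L1) = 0"
    by (rule h[rule_format], rule ct_mem) (simp add: distinct3_def)
  have s19: "Phi (L1, Star, Dot) + Phi (L2, Dot, StarOp) = 0"
    using r19 by (simp add: expand rdefs algebra_simps)
  have r20: "kd_pair Phi (ct_r1 L3 L1 L2) = 0"
    by (rule h[rule_format], rule ct_mem) (simp add: distinct3_def)
  have s20: "- Phi (L2, Star, StarOp) + - Phi (L3, StarOp, Star) = 0"
    using r20 by (simp add: expand rdefs algebra_simps)
  have r21: "kd_pair Phi (ct_r2 L3 L1 L2) = 0"
    by (rule h[rule_format], rule ct_mem) (simp add: distinct3_def)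
  have s21: "Phi (L3, StarOp, Star) + - Phi (L3, StarOp, StarOp) = 0"
    using r21 by (simp add: expand rdefs algebra_simps)
  have r24: "kd_pair Phi (ct_r5 L3 L1 L2) = 0"
    by (rule h[rule_format], rule ct_mem) (simp add: distinct3_def)
  have s24: "- Phi (L2, Star, Dot) + - Phi (L3, Dot, Star) = 0"
    using r24 by (simp add: expand rdefs algebra_simps)
  have r25: "kd_pair Phi (ct_r1 L3 L2 L1) = 0"
    by (rule h[rule_format], rule ct_mem) (simp add: distinct3_def)
  have s25: "Phi (L1, Star, StarOp) + - Phi (L3, StarOp, StarOp) = 0"
    using r25 by (simp add: expand rdefs algebra_simps)
  have r28: "kd_pair Phi (ct_r4 L3 L2 L1) = 0"
    by (rule h[rule_format], rule ct_mem) (simp add: distinct3_def)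
  have s28: "- Phi (L3, StarOp, StarOp) + Phi (L3, StarOp, Dot) = 0"
    using r28 by (simp add: expand rdefs algebra_simps)
  have r29: "kd_pair Phi (ct_r5 L3 L2 L1) = 0"
    by (rule h[rule_format], rule ct_mem) (simp add: distinct3_def)
  have s29: "Phi (L1, Star, Dot) + - Phi (L3, Dot, StarOp) = 0"
    using r29 by (simp add: expand rdefs algebra_simps)
  have e_2_SO_SO: "Phi (L2, StarOp, StarOp) = - Phi (L1, Star, Star)"
    using s15  by algebra
  have e_2_SO_S: "Phi (L2, StarOp, Star) = - Phi (L1, Star, Star)"
    using s11 e_2_SO_SO by algebra
  have e_2_SO_D: "Phi (L2, StarOp, Dot) = - Phi (L1, Star, Star)"
    using s18 e_2_SO_SO by algebra
  have e_3_S_SO: "Phi (L3, Star, StarOp) = Phi (L1, Star, Star)"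
    using s10 e_2_SO_S by algebra
  have e_3_SO_SO: "Phi (L3, StarOp, StarOp) = Phi (L1, Star, StarOp)"
    using s25  by algebra
  have e_3_SO_S: "Phi (L3, StarOp, Star) = Phi (L1, Star, StarOp)"
    using s21 e_3_SO_SO by algebra
  have e_3_SO_D: "Phi (L3, StarOp, Dot) = Phi (L1, Star, StarOp)"
    using s28 e_3_SO_SO by algebra
  have e_2_S_SO: "Phi (L2, Star, StarOp) = - Phi (L1, Star, StarOp)"
    using s20 e_3_SO_S by algebra
  have e_2_D_SO: "Phi (L2, Dot, StarOp) = - Phi (L1, Star, Dot)"
    using s19  by algebra
  have e_3_D_SO: "Phi (L3, Dot, StarOp) = Phi (L1, Star, Dot)"
    using s29  by algebra
  have e_3_S_S: "Phi (L3, Star, Star) = Phi (L1, StarOp, Star)"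
    using s0  by algebra
  have e_1_SO_SO: "Phi (L1, StarOp, StarOp) = Phi (L1, StarOp, Star)"
    using s1  by algebra
  have e_1_SO_D: "Phi (L1, StarOp, Dot) = Phi (L1, StarOp, Star)"
    using s3  by algebra
  have e_2_S_S: "Phi (L2, Star, Star) = - Phi (L1, StarOp, Star)"
    using s5 e_1_SO_SO by algebra
  have e_3_S_D: "Phi (L3, Star, Dot) = Phi (L1, Dot, Star)"
    using s4  by algebra
  have e_2_D_S: "Phi (L2, Dot, Star) = - Phi (L1, Dot, Star)"
    using s14 e_3_S_D by algebra
  have e_2_S_D: "Phi (L2, Star, Dot) = - Phi (L1, Dot, StarOp)"
    using s9  by algebra
  have e_3_D_S: "Phi (L3, Dot, Star) = Phi (L1, Dot, StarOp)"
    using s24 e_2_S_D by algebra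
  have e_3_D_D: "Phi (L3, Dot, Dot) = Phi (L1, Dot, Dot)"
    using s2  by algebra
  have e_2_D_D: "Phi (L2, Dot, Dot) = - Phi (L1, Dot, Dot)"
    using s7  by algebra
  show ?thesis unfolding EE_def using e_2_SO_SO e_2_SO_S e_2_SO_D e_3_S_SO e_3_SO_SO e_3_SO_S e_3_SO_D e_2_S_SO e_2_D_SO e_3_D_SO e_3_S_S e_1_SO_SO e_1_SO_D e_2_S_S e_3_S_D e_2_D_S e_2_S_D e_3_D_S e_3_D_D e_2_D_D by blast
qed


lemma EE_orth:
  fixes Phi :: "('k::field_char_0, ct_gen) tree3"
  assumes e: "EE Phi" and t: "t \<in> ct_rels" shows "kd_pair Phi t = 0"
proof -
  obtain x y z where "distinct3 x y z" and
    "t = ct_r1 x y z \<or> t = ct_r2 x y z \<or> t = ct_r3 x y z \<or> t = ct_r4 x y z \<or> t = ct_r5 x y z"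
    using t unfolding ct_rels_eq by blast
  then show ?thesis using e unfolding EE_def distinct3_def
    by (cases x; cases y; cases z) (auto simp: expand rdefs)
qed

lemma pl_EE:
  fixes r :: "('k::field_char_0, pl_gen) tree3"
  assumes t: "r \<in> pl_rels" shows "EE (tree_map ident r)"
proof -
  obtain x y z where "distinct3 x y z" and
    "r = pl_r1 x y z \<or> r = pl_r2 x y z \<or> r = pl_r3 x y z"
    using t unfolding pl_rels_eq by blast
  then show ?thesis unfolding EE_def distinct3_def
    by (cases x; cases y; cases z) (auto simp: expand rdefs)
qed

lemma tree_map_add: "tree_map P (a + b) = tree_map P a + tree_map P b"
  by (auto simp: tree_map_def fun_eq_iff sum.distrib distrib_left case_prod_beta)

lemma tree_map_scale: "tree_map P (fscale c a) = fscale c (tree_map P a)"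
  by (simp add: tree_map_def fscale_def fun_eq_iff sum_distrib_left mult_ac case_prod_beta)

lemma tree_map_zero: "tree_map P 0 = 0"
  by (simp add: tree_map_def fun_eq_iff case_prod_beta)

lemma kd_pair_add: "kd_pair Phi (a + b) = kd_pair Phi a + kd_pair Phi b"
  by (simp add: kd_pair_def sum.distrib distrib_left case_prod_beta)

lemma kd_pair_scale: "kd_pair Phi (fscale c a) = c * kd_pair Phi a"
  by (simp add: kd_pair_def fscale_def sum_distrib_left mult_ac case_prod_beta)

lemma kd_pair_zero: "kd_pair Phi 0 = 0"
  by (simp add: kd_pair_def case_prod_beta)

lemma EE_add: "EE a \<Longrightarrow> EE b \<Longrightarrow> EE (a + b)"
  unfolding EE_def by simp

lemma EE_scale: "EE a \<Longrightarrow> EE (fscale c a)"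
  unfolding EE_def fscale_def by simp

lemma EE_zero: "EE 0"
  unfolding EE_def by simp

lemma sub1:
  fixes x :: "('k::field_char_0, pl_gen) tree3"
  assumes "x \<in> lspan pl_rels" shows "EE (tree_map ident x)"
proof (rule module.span_induct[OF module_fscale assms])
  show "module.subspace fscale {x. EE (tree_map ident (x :: ('k, pl_gen) tree3))}"
    unfolding module.subspace_def[OF module_fscale]
    by (simp add: tree_map_add tree_map_scale tree_map_zero EE_add EE_scale EE_zero)
  show "\<And>x :: ('k, pl_gen) tree3. x \<in> pl_rels \<Longrightarrow> EE (tree_map ident x)" by (rule pl_EE)
qed

lemma sub2:
  fixes Phi :: "('k::field_char_0, ct_gen) tree3"
  assumes e: "EE Phi" shows "Phi \<in> kd_rel (lspan ct_rels)"
  unfolding kd_rel_def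
proof (intro CollectI ballI)
  fix T assume "T \<in> lspan (ct_rels :: ('k, ct_gen) tree3 set)"
  then show "kd_pair Phi T = 0"
  proof (rule module.span_induct[OF module_fscale])
    show "module.subspace fscale {T. kd_pair Phi T = 0}"
      unfolding module.subspace_def[OF module_fscale]
      by (simp add: kd_pair_add kd_pair_scale kd_pair_zero)
    show "\<And>x. x \<in> ct_rels \<Longrightarrow> kd_pair Phi x = 0" using EE_orth[OF e] .
  qed
qed

lemma sub3:
  fixes Phi :: "('k::field_char_0, ct_gen) tree3"
  assumes p: "Phi \<in> kd_rel (lspan ct_rels)" shows "Phi \<in> tree_map ident ` lspan pl_rels"
proof -
  have "\<forall>t\<in>ct_rels. kd_pair Phi t = 0"
    using p module.span_superset[OF module_fscale, of ct_rels] unfolding kd_rel_def by blast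
  then have e: "EE Phi" by (rule orth_EE)
  define R :: "('k, pl_gen) tree3" where "R = fscale (Phi (L1, Star, Star)) (pl_r2 L2 L3 L1) + fscale (Phi (L1, Star, StarOp)) (pl_r2 L3 L1 L2) + fscale (Phi (L1, Star, Dot)) (pl_r3 L2 L3 L1) + fscale (Phi (L1, StarOp, Star)) (pl_r2 L1 L2 L3) + fscale (Phi (L1, Dot, Star)) (pl_r3 L1 L2 L3) + fscale (Phi (L1, Dot, StarOp)) (pl_r3 L3 L1 L2) + fscale (Phi (L1, Dot, Dot)) (pl_r1 L1 L2 L3)"
  have m0: "fscale (Phi (L1, Star, Star)) (pl_r2 L2 L3 L1) \<in> lspan pl_rels"
    by (intro module.span_scale[OF module_fscale] module.span_base[OF module_fscale] pl_mem) (simp add: distinct3_def)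
  have m1: "fscale (Phi (L1, Star, StarOp)) (pl_r2 L3 L1 L2) \<in> lspan pl_rels"
    by (intro module.span_scale[OF module_fscale] module.span_base[OF module_fscale] pl_mem) (simp add: distinct3_def)
  have m2: "fscale (Phi (L1, Star, Dot)) (pl_r3 L2 L3 L1) \<in> lspan pl_rels"
    by (intro module.span_scale[OF module_fscale] module.span_base[OF module_fscale] pl_mem) (simp add: distinct3_def)
  have m3: "fscale (Phi (L1, StarOp, Star)) (pl_r2 L1 L2 L3) \<in> lspan pl_rels"
    by (intro module.span_scale[OF module_fscale] module.span_base[OF module_fscale] pl_mem) (simp add: distinct3_def)
  have m4: "fscale (Phi (L1, Dot, Star)) (pl_r3 L1 L2 L3) \<in> lspan pl_rels"
    by (intro module.span_scale[OF module_fscale] module.span_base[OF module_fscale] pl_mem) (simp add: distinct3_def)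
  have m5: "fscale (Phi (L1, Dot, StarOp)) (pl_r3 L3 L1 L2) \<in> lspan pl_rels"
    by (intro module.span_scale[OF module_fscale] module.span_base[OF module_fscale] pl_mem) (simp add: distinct3_def)
  have m6: "fscale (Phi (L1, Dot, Dot)) (pl_r1 L1 L2 L3) \<in> lspan pl_rels"
    by (intro module.span_scale[OF module_fscale] module.span_base[OF module_fscale] pl_mem) (simp add: distinct3_def)
  have "R \<in> lspan pl_rels" unfolding R_def
    by (intro module.span_add[OF module_fscale] m0 m1 m2 m3 m4 m5 m6)
  moreover have "Phi = tree_map ident R"
  proof (rule ext, clarify)
    fix c g h
    show "Phi (c, g, h) = tree_map ident R (c, g, h)"
      using e unfolding EE_def R_def
      by (cases c; cases g; cases h) (simp_all add: expand rdefs fscale_def)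
  qed
  ultimately show ?thesis by blast
qed

lemma ident_bij: "bij (matact (ident :: ct_gen \<Rightarrow> pl_gen \<Rightarrow> 'k::comm_ring_1))"
proof (rule o_bij)
  define G :: "(ct_gen \<Rightarrow> 'k) \<Rightarrow> (pl_gen \<Rightarrow> 'k)" where
    "G = (\<lambda>w h. case h of Circ \<Rightarrow> w Star | CircOp \<Rightarrow> - w StarOp | Br \<Rightarrow> w Dot)"
  have 1: "G (matact ident v) h = v h" for v h
    by (cases h) (simp_all add: G_def expand)
  have 2: "matact ident (G w) g = w g" for w g
    by (cases g) (simp_all add: G_def expand)
  show "G \<circ> matact ident = id" using 1 by (simp add: fun_eq_iff)
  show "matact ident \<circ> G = id" using 2 by (simp add: fun_eq_iff)
qed

lemma ident_equiv: "matact (ident :: ct_gen \<Rightarrow> pl_gen \<Rightarrow> 'k::comm_ring_1) (matact pl_action v)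
   = matact (kd_action ct_action) (matact ident v)"
proof (rule ext)
  fix g show "matact (ident :: ct_gen \<Rightarrow> pl_gen \<Rightarrow> 'k) (matact pl_action v) g
   = matact (kd_action ct_action) (matact ident v) g"
    by (cases g) (simp_all add: expand kd_action_def)
qed

theorem mainTheorem14:
  "quad_iso (pl_action :: pl_gen \<Rightarrow> pl_gen \<Rightarrow> 'k::field_char_0) (lspan pl_rels)
            (kd_action ct_action) (kd_rel (lspan ct_rels)) ident"
  unfolding quad_iso_def
proof (intro conjI allI)
  show "bij (matact (ident :: ct_gen \<Rightarrow> pl_gen \<Rightarrow> 'k))" by (rule ident_bij)
  show "matact ident (matact pl_action v) = matact (kd_action ct_action) (matact (ident :: ct_gen \<Rightarrow> pl_gen \<Rightarrow> 'k) v)" for v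
    by (rule ident_equiv)
  show "tree_map ident ` lspan pl_rels = kd_rel (lspan (ct_rels :: ('k, ct_gen) tree3 set))"
  proof
    show "tree_map ident ` lspan pl_rels \<subseteq> kd_rel (lspan (ct_rels :: ('k, ct_gen) tree3 set))"
      using sub1 sub2 by blast
    show "kd_rel (lspan (ct_rels :: ('k, ct_gen) tree3 set)) \<subseteq> tree_map ident ` lspan pl_rels"
      using sub3 by blast
  qed
qed

end
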